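(* For every even $n\ge2$ there exists a unique $w_n\in\mathcal F_n$ with $\tau_{\mathbf m}(w_n)=\{s_{n/2}\}$. Moreover, for $n\ge4$, $w_n=\nu_{n/2}(\rho(w_{n-2}))$.
   Context: $s_i=(i,i+1)$; permutations compose right to left. For even $m$, $\mathcal F_m$ is the set of fixed-point-free involutions of $S_m$ with conjugation action, height $\ell/2$, Bruhat order the weakest partial order with $z\le tzt$ for transpositions $t$ with $\ell(z)\le\ell(tzt)$, and $\tau_{\mathbf m}(z)=\{s_i:s_izs_i\le z\}$. Regard $\mathcal F_{n-2}\subset S_n$; $w_0$ longest element of $S_n$; $\rho(z)=w_0zs_{n-1}w_0$; $Y_1=\rho(\mathcal F_{n-2})$; $\sigma_j=s_j\cdots s_1$; $\nu_j(x)=\sigma_jx\sigma_j^{-1}$ for $x\in Y_1$. *)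

theory Defs
  imports "HOL-Combinatorics.Combinatorics"
begin

(* Permutations of S_m are maps nat => nat permuting {1..m} (identity elsewhere);
   composition is right to left: (p o q) x = p (q x). *)

definition simple :: "nat \<Rightarrow> nat \<Rightarrow> nat" where
  "simple i = transpose i (Suc i)"

(* Coxeter length = number of inversions *)
definition len :: "nat \<Rightarrow> (nat \<Rightarrow> nat) \<Rightarrow> nat" where
  "len m w = card {(i, j). 1 \<le> i \<and> i < j \<and> j \<le> m \<and> w j < w i}"

definition FPF :: "nat \<Rightarrow> (nat \<Rightarrow> nat) set" where
  "FPF m = {z. z permutes {1..m} \<and> z \<circ> z = id \<and> (\<forall>i\<in>{1..m}. z i \<noteq> i)}"

definition bruhat_step :: "nat \<Rightarrow> (nat \<Rightarrow> nat) \<Rightarrow> (nat \<Rightarrow> nat) \<Rightarrow> bool" where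
  "bruhat_step m z y \<longleftrightarrow> z \<in> FPF m \<and>
     (\<exists>a b. 1 \<le> a \<and> a < b \<and> b \<le> m \<and> y = transpose a b \<circ> z \<circ> transpose a b
            \<and> len m z \<le> len m y)"

definition bruhat_le :: "nat \<Rightarrow> (nat \<Rightarrow> nat) \<Rightarrow> (nat \<Rightarrow> nat) \<Rightarrow> bool" where
  "bruhat_le m z y \<longleftrightarrow> z \<in> FPF m \<and> y \<in> FPF m \<and> (bruhat_step m)\<^sup>*\<^sup>* z y"

definition tau :: "nat \<Rightarrow> (nat \<Rightarrow> nat) \<Rightarrow> (nat \<Rightarrow> nat) set" where
  "tau m z = {simple i | i. 1 \<le> i \<and> i < m \<and> bruhat_le m (simple i \<circ> z \<circ> simple i) z}"

definition w0 :: "nat \<Rightarrow> nat \<Rightarrow> nat" where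
  "w0 n = (\<lambda>i. if 1 \<le> i \<and> i \<le> n then n + 1 - i else i)"

definition rho :: "nat \<Rightarrow> (nat \<Rightarrow> nat) \<Rightarrow> (nat \<Rightarrow> nat)" where
  "rho n z = w0 n \<circ> z \<circ> simple (n - 1) \<circ> w0 n"

fun sigma :: "nat \<Rightarrow> nat \<Rightarrow> nat" where
  "sigma 0 = id"
| "sigma (Suc j) = simple (Suc j) \<circ> sigma j"

definition nu :: "nat \<Rightarrow> (nat \<Rightarrow> nat) \<Rightarrow> (nat \<Rightarrow> nat)" where
  "nu j x = sigma j \<circ> x \<circ> inv (sigma j)"

end

theory Submission imports Defs begin

lemma simple_apply: "simple i x = (if x = i then Suc i else if x = Suc i then i else x)"
  by (simp add: simple_def transpose_def)

lemma simple_simple: "simple i \<circ> simple i = id"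
  by (simp add: simple_def)

definition Inv :: "nat \<Rightarrow> (nat \<Rightarrow> nat) \<Rightarrow> (nat \<times> nat) set" where
  "Inv m p = {(i, j). 1 \<le> i \<and> i < j \<and> j \<le> m \<and> p j < p i}"

lemma len_Inv: "len m p = card (Inv m p)"
  by (simp add: len_def Inv_def)

lemma finite_Inv: "finite (Inv m p)"
  by (rule finite_subset[of _ "{1..m} \<times> {1..m}"]) (auto simp: Inv_def)

lemma len_right:
  assumes "1 \<le> i" "i < m" "p (Suc i) < p i"
  shows "len m (p \<circ> simple i) + 1 \<le> len m p"
proof -
  let ?f = "\<lambda>(a, b). (simple i a, simple i b)"
  have inj: "inj_on ?f (Inv m (p \<circ> simple i))"
    by (rule inj_onI) (auto simp: simple_apply split: if_splits)
  have sub: "?f ` Inv m (p \<circ> simple i) \<subseteq> Inv m p - {(i, Suc i)}"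
    using assms by (auto simp: Inv_def simple_apply split: if_splits)
  have mem: "(i, Suc i) \<in> Inv m p" using assms by (auto simp: Inv_def)
  have "card (Inv m (p \<circ> simple i)) = card (?f ` Inv m (p \<circ> simple i))"
    using inj by (simp add: card_image)
  also have "\<dots> \<le> card (Inv m p - {(i, Suc i)})"
    by (rule card_mono[OF _ sub]) (simp add: finite_Inv)
  also have "\<dots> = card (Inv m p) - 1" using mem finite_Inv by simp
  finally have c: "card (Inv m (p \<circ> simple i)) \<le> card (Inv m p) - 1" .
  have "card (Inv m p) > 0" using mem finite_Inv card_gt_0_iff by blast
  then show ?thesis using c by (simp add: len_Inv)
qed

lemma len_left:
  assumes "inj q"
  shows "len m (simple i \<circ> q) \<le> len m q + 1"
proof -
  have sub: "Inv m (simple i \<circ> q) \<subseteq> insert (inv q i, inv q (Suc i)) (Inv m q)"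
  proof
    fix x assume x: "x \<in> Inv m (simple i \<circ> q)"
    obtain a b where ab: "x = (a, b)" by force
    show "x \<in> insert (inv q i, inv q (Suc i)) (Inv m q)"
    proof (cases "q b < q a")
      case True then show ?thesis using x ab by (auto simp: Inv_def)
    next
      case False
      have "q a \<noteq> q b" using x ab assms by (auto simp: Inv_def inj_eq)
      with False have "q a < q b" by simp
      moreover have "simple i (q b) < simple i (q a)" using x ab by (auto simp: Inv_def)
      ultimately have "q a = i \<and> q b = Suc i" by (auto simp: simple_apply split: if_splits)
      then have "a = inv q i \<and> b = inv q (Suc i)" using assms by (metis inv_f_f)
      then show ?thesis using ab by simp
    qed
  qed
  have "card (Inv m (simple i \<circ> q)) \<le> card (insert (inv q i, inv q (Suc i)) (Inv m q))"
    by (rule card_mono[OF _ sub]) (simp add: finite_Inv)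
  also have "\<dots> \<le> card (Inv m q) + 1" by (simp add: card_insert_if finite_Inv)
  finally show ?thesis by (simp add: len_Inv)
qed

lemma FPF_conj:
  assumes "z \<in> FPF m" "1 \<le> i" "i < m"
  shows "simple i \<circ> z \<circ> simple i \<in> FPF m"
proof -
  have s: "simple i permutes {1..m}" using assms unfolding simple_def
    by (intro permutes_swap_id) auto
  have zp: "z permutes {1..m}" "z \<circ> z = id" "\<forall>x\<in>{1..m}. z x \<noteq> x" using assms by (auto simp: FPF_def)
  have "simple i \<circ> z \<circ> simple i permutes {1..m}"
    using s zp by (intro permutes_compose) auto
  moreover have "(simple i \<circ> z \<circ> simple i) \<circ> (simple i \<circ> z \<circ> simple i) = id"
  proof -
    have "(simple i \<circ> z \<circ> simple i) \<circ> (simple i \<circ> z \<circ> simple i) = simple i \<circ> z \<circ> (simple i \<circ> simple i) \<circ> z \<circ> simple i"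
      by (simp add: comp_assoc)
    also have "\<dots> = simple i \<circ> (z \<circ> z) \<circ> simple i" by (simp add: simple_simple comp_assoc)
    finally show ?thesis by (simp add: zp simple_simple)
  qed
  moreover have "\<forall>x\<in>{1..m}. (simple i \<circ> z \<circ> simple i) x \<noteq> x"
  proof
    fix x assume x: "x \<in> {1..m}"
    have sx: "simple i x \<in> {1..m}" using x assms by (auto simp: simple_apply)
    show "(simple i \<circ> z \<circ> simple i) x \<noteq> x"
    proof
      assume "(simple i \<circ> z \<circ> simple i) x = x"
      then have "simple i (simple i (z (simple i x))) = simple i x" by simp
      then have "z (simple i x) = simple i x" using simple_simple by (metis comp_apply id_apply)
      with zp(3) sx show False by blast
    qed
  qed
  ultimately show ?thesis by (simp add: FPF_def)
qed

lemma FPF_inj: "z \<in> FPF m \<Longrightarrow> inj z"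
  by (auto simp: FPF_def permutes_inj)

lemma descent_tau:
  assumes "z \<in> FPF m" "1 \<le> i" "i < m" "z (Suc i) < z i"
  shows "simple i \<in> tau m z"
proof -
  let ?y = "simple i \<circ> z \<circ> simple i"
  have y: "?y \<in> FPF m" using FPF_conj assms by blast
  have l1: "len m (z \<circ> simple i) + 1 \<le> len m z" using len_right assms by blast
  have "inj (simple i)" by (rule injI) (metis simple_simple comp_apply id_apply)
  then have "inj (z \<circ> simple i)" using FPF_inj[OF assms(1)] by (rule inj_compose[rotated])
  then have l2: "len m (simple i \<circ> (z \<circ> simple i)) \<le> len m (z \<circ> simple i) + 1" by (rule len_left)
  have l: "len m ?y \<le> len m z" using l1 l2 by (simp add: comp_assoc)
  have bk: "z = simple i \<circ> ?y \<circ> simple i"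
    by (simp add: comp_assoc simple_simple) (simp add: comp_assoc[symmetric] simple_simple)
  have "bruhat_step m ?y z"
    unfolding bruhat_step_def using y l bk assms
    by (intro conjI exI[of _ i] exI[of _ "Suc i"]) (auto simp: simple_def)
  then have "bruhat_le m ?y z" using y assms(1) by (auto simp: bruhat_le_def)
  then show ?thesis using assms by (auto simp: tau_def)
qed

lemma bruhat_len: "bruhat_le m y z \<Longrightarrow> len m y \<le> len m z"
  unfolding bruhat_le_def
proof (elim conjE)
  assume "(bruhat_step m)\<^sup>*\<^sup>* y z"
  then show "len m y \<le> len m z"
    by (induction rule: rtranclp_induct) (auto simp: bruhat_step_def o_def intro: le_trans)
qed


definition W :: "nat \<Rightarrow> nat \<Rightarrow> nat" where
  "W k x = (if 1 \<le> x \<and> x \<le> k then x + k else if k < x \<and> x \<le> 2 * k then x - k else x)"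

lemma W_W: "W k \<circ> W k = id"
  by (auto simp: fun_eq_iff W_def)

lemma W_FPF: "W k \<in> FPF (2 * k)"
proof -
  have "W k permutes {1..2*k}"
    unfolding permutes_def
  proof (intro conjI allI impI)
    fix x assume "x \<notin> {1..2*k}" then show "W k x = x" by (auto simp: W_def)
  next
    fix y show "\<exists>!x. W k x = y"
      by (rule ex1I[of _ "W k y"]) (metis W_W comp_apply id_apply)+
  qed
  then show ?thesis using W_W by (auto simp: FPF_def W_def)
qed

lemma sigma_closed: "sigma j x = (if x = 1 then j + 1 else if 2 \<le> x \<and> x \<le> j + 1 then x - 1 else x)"
  by (induction j arbitrary: x) (auto simp: simple_apply)

definition G :: "nat \<Rightarrow> nat \<Rightarrow> nat" where
  "G j x = (if x = j + 1 then 1 else if 1 \<le> x \<and> x \<le> j then x + 1 else x)"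

lemma inv_sigma: "inv (sigma j) = G j"
  by (rule inv_unique_comp) (auto simp: fun_eq_iff sigma_closed G_def)

lemma rho_closed:
  assumes "2 \<le> k"
  shows "rho (2 * k) (W (k - 1)) x = (if x = 1 then 2 else if x = 2 then 1 else
     if 3 \<le> x \<and> x \<le> k + 1 then x + k - 1 else if k + 2 \<le> x \<and> x \<le> 2 * k then x - k + 1 else x)"
proof -
  have e: "rho (2 * k) (W (k - 1)) x = w0 (2*k) (W (k - 1) (simple (2*k - 1) (w0 (2*k) x)))"
    by (simp add: rho_def)
  consider "x = 0" | "x = 1" | "x = 2" | "3 \<le> x \<and> x \<le> k + 1" | "k + 2 \<le> x \<and> x \<le> 2 * k" | "2 * k < x"
    by linarith
  then show ?thesis
  proof cases
    case 1 then show ?thesis using assms e by (simp add: w0_def W_def simple_apply)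
  next
    case 2
    have "w0 (2*k) x = 2*k" using 2 assms by (auto simp add: w0_def)
    moreover have "simple (2*k - 1) (2*k) = 2*k - 1" using assms by (auto simp add: simple_apply)
    moreover have "W (k - 1) (2*k - 1) = 2*k - 1"
    proof -
      have "\<not> (2*k-1 \<le> 2*(k-1))" "\<not> (2*k-1 \<le> k-1)" using assms by arith+
      then show ?thesis unfolding W_def by presburger
    qed
    moreover have "w0 (2*k) (2*k - 1) = 2" using assms by (auto simp add: w0_def)
    ultimately show ?thesis using e 2 by simp
  next
    case 3
    have "w0 (2*k) x = 2*k - 1" using 3 assms by (auto simp add: w0_def)
    moreover have "simple (2*k - 1) (2*k - 1) = 2*k" using assms by (auto simp add: simple_apply)
    moreover have "W (k - 1) (2*k) = 2*k" using assms by (auto simp add: W_def)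
    moreover have "w0 (2*k) (2*k) = 1" using assms by (auto simp add: w0_def)
    ultimately show ?thesis using e 3 by simp
  next
    case 4
    have "w0 (2*k) x = 2*k + 1 - x" using 4 assms by (auto simp add: w0_def)
    moreover have "simple (2*k - 1) (2*k + 1 - x) = 2*k + 1 - x"
    proof -
      have "2*k+1-x \<noteq> 2*k - 1" "2*k+1-x \<noteq> Suc (2*k - 1)" using 4 assms by arith+
      then show ?thesis by (simp only: simple_apply if_False)
    qed
    moreover have "W (k - 1) (2*k + 1 - x) = 2*k + 1 - x - (k - 1)" using 4 assms by (auto simp add: W_def)
    moreover have "w0 (2*k) (2*k + 1 - x - (k - 1)) = x + k - 1" using 4 assms by (auto simp add: w0_def)
    ultimately show ?thesis using e 4 by simp
  next
    case 5
    have "w0 (2*k) x = 2*k + 1 - x" using 5 assms by (auto simp add: w0_def)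
    moreover have "simple (2*k - 1) (2*k + 1 - x) = 2*k + 1 - x" using 5 assms by (auto simp add: simple_apply)
    moreover have "W (k - 1) (2*k + 1 - x) = 2*k + 1 - x + (k - 1)" using 5 assms by (auto simp add: W_def)
    moreover have "w0 (2*k) (2*k + 1 - x + (k - 1)) = x - k + 1" using 5 assms by (auto simp add: w0_def)
    ultimately show ?thesis using e 5 by simp
  next
    case 6
    have "w0 (2*k) x = x" using 6 by (auto simp add: w0_def)
    moreover have "simple (2*k - 1) x = x" using 6 assms by (auto simp add: simple_apply)
    moreover have "W (k - 1) x = x" using 6 assms by (auto simp add: W_def)
    ultimately show ?thesis using e 6 assms by simp
  qed
qed

lemma part2:
  assumes "2 \<le> k"
  shows "nu k (rho (2 * k) (W (k - 1))) = W k"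
proof
  fix x
  have e: "nu k (rho (2 * k) (W (k - 1))) x = sigma k (rho (2 * k) (W (k - 1)) (G k x))"
    by (simp add: nu_def inv_sigma)
  consider "x = 0" | "x = 1" | "2 \<le> x \<and> x \<le> k" | "x = k + 1" | "k + 2 \<le> x \<and> x \<le> 2 * k" | "2 * k < x"
    by linarith
  then show "nu k (rho (2 * k) (W (k - 1))) x = W k x"
  proof cases
    case 1
    have "G k x = 0" using 1 by (simp add: G_def)
    moreover have "rho (2 * k) (W (k - 1)) 0 = 0" using rho_closed[OF assms, of 0] by simp
    moreover have "sigma k 0 = 0" by (simp add: sigma_closed)
    ultimately show ?thesis using 1 e assms by (simp add: W_def)
  next
    case 2
    have "G k x = 2" using 2 assms by (simp add: G_def)
    moreover have "rho (2 * k) (W (k - 1)) 2 = 1" using rho_closed[OF assms, of "2"] by auto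
    moreover have "sigma k 1 = k + 1" by (simp add: sigma_closed)
    ultimately show ?thesis using 2 e assms by (simp add: W_def)
  next
    case 3
    have "G k x = x + 1" using 3 by (simp add: G_def)
    moreover have "rho (2 * k) (W (k - 1)) (x + 1) = x + k" using 3 assms rho_closed[OF assms, of "(x + 1)"] by auto
    moreover have "sigma k (x + k) = x + k" using 3 assms by (simp add: sigma_closed)
    ultimately show ?thesis using 3 e assms by (simp add: W_def)
  next
    case 4
    have "G k x = 1" using 4 by (simp add: G_def)
    moreover have "rho (2 * k) (W (k - 1)) 1 = 2" using rho_closed[OF assms, of "1"] by auto
    moreover have "sigma k 2 = 1" using assms by (simp add: sigma_closed)
    ultimately show ?thesis using 4 e assms by (simp add: W_def)
  next
    case 5
    have "G k x = x" using 5 by (simp add: G_def)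
    moreover have "rho (2 * k) (W (k - 1)) x = x - k + 1" using 5 assms rho_closed[OF assms, of "x"] by auto
    moreover have "sigma k (x - k + 1) = x - k" using 5 assms by (auto simp add: sigma_closed)
    ultimately show ?thesis using 5 e assms by (simp add: W_def)
  next
    case 6
    have "G k x = x" using 6 by (simp add: G_def)
    moreover have "rho (2 * k) (W (k - 1)) x = x" using 6 assms rho_closed[OF assms, of "x"] by auto
    moreover have "sigma k x = x" using 6 by (simp add: sigma_closed)
    ultimately show ?thesis using 6 e assms by (simp add: W_def)
  qed
qed

lemma Inv_W: "(a, b) \<in> Inv (2 * k) (W k) \<Longrightarrow> 1 \<le> a \<and> a \<le> k \<and> k < b \<and> b \<le> 2 * k"
  by (auto simp: Inv_def W_def split: if_splits)

lemma Inv_W_strict: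
  assumes "1 \<le> i" "i < 2 * k" "i \<noteq> k"
  shows "len (2 * k) (W k) < len (2 * k) (simple i \<circ> W k \<circ> simple i)"
proof -
  let ?y = "simple i \<circ> W k \<circ> simple i"
  have sub: "Inv (2 * k) (W k) \<subseteq> Inv (2 * k) ?y"
  proof
    fix p assume p: "p \<in> Inv (2 * k) (W k)"
    obtain a b where ab: "p = (a, b)" by force
    have r: "1 \<le> a" "a \<le> k" "k < b" "b \<le> 2 * k" using Inv_W p ab by auto
    have a1: "1 \<le> simple i a \<and> simple i a \<le> k" using r assms by (auto simp: simple_apply)
    have b1: "k < simple i b \<and> simple i b \<le> 2 * k" using r assms by (auto simp: simple_apply)
    have a2: "k < W k (simple i a) \<and> W k (simple i a) \<le> 2 * k" using a1 by (auto simp: W_def)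
    have b2: "1 \<le> W k (simple i b) \<and> W k (simple i b) \<le> k" using b1 by (auto simp: W_def)
    have a3: "k < ?y a" using a2 assms by (auto simp: simple_apply)
    have b3: "?y b \<le> k" using b2 assms by (auto simp: simple_apply)
    show "p \<in> Inv (2 * k) ?y" using a3 b3 r ab by (auto simp: Inv_def)
  qed
  have ne: "(i, Suc i) \<notin> Inv (2 * k) (W k)" using Inv_W assms by fastforce
  have "?y (Suc i) < ?y i"
  proof (cases "i < k")
    case True
    have "?y i = Suc i + k"
    proof -
      have "simple i i = Suc i" by (simp add: simple_apply)
      moreover have "W k (Suc i) = Suc i + k" using True assms by (simp add: W_def)
      moreover have "simple i (Suc i + k) = Suc i + k" using True assms by (simp add: simple_apply)
      ultimately show ?thesis by simp
    qed
    moreover have "?y (Suc i) = i + k"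
    proof -
      have "simple i (Suc i) = i" by (simp add: simple_apply)
      moreover have "W k i = i + k" using True assms by (simp add: W_def)
      moreover have "simple i (i + k) = i + k" using True assms by (simp add: simple_apply)
      ultimately show ?thesis by simp
    qed
    ultimately show ?thesis by simp
  next
    case False
    then have F: "k < i" using assms by simp
    have "?y i = Suc i - k"
    proof -
      have "simple i i = Suc i" by (simp add: simple_apply)
      moreover have "W k (Suc i) = Suc i - k" using F assms by (simp add: W_def)
      moreover have "simple i (Suc i - k) = Suc i - k" using F assms by (auto simp add: simple_apply)
      ultimately show ?thesis by simp
    qed
    moreover have "?y (Suc i) = i - k"
    proof -
      have "simple i (Suc i) = i" by (simp add: simple_apply)
      moreover have "W k i = i - k" using F assms by (simp add: W_def)
      moreover have "simple i (i - k) = i - k" using F assms by (auto simp add: simple_apply)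
      ultimately show ?thesis by simp
    qed
    ultimately show ?thesis using F by simp
  qed
  then have "(i, Suc i) \<in> Inv (2 * k) ?y" using assms by (simp add: Inv_def)
  then have new: "(i, Suc i) \<in> Inv (2 * k) ?y - Inv (2 * k) (W k)" using ne by blast
  have "Inv (2 * k) (W k) \<subset> Inv (2 * k) ?y" using sub new by blast
  then show ?thesis by (simp add: len_Inv psubset_card_mono finite_Inv)
qed

lemma simple_inj: assumes "simple i = simple j" shows "i = j"
proof -
  have "simple i i = simple j i" using assms by simp
  then show ?thesis by (simp add: simple_apply split: if_splits)
qed

lemma W_tau:
  assumes "1 \<le> k"
  shows "tau (2 * k) (W k) = {simple k}"
proof
  show "{simple k} \<subseteq> tau (2 * k) (W k)"
    using descent_tau[OF W_FPF, of k k] assms by (auto simp: W_def)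
next
  show "tau (2 * k) (W k) \<subseteq> {simple k}"
  proof
    fix x assume "x \<in> tau (2 * k) (W k)"
    then obtain i where i: "x = simple i" "1 \<le> i" "i < 2 * k"
      "bruhat_le (2 * k) (simple i \<circ> W k \<circ> simple i) (W k)" by (auto simp: tau_def)
    have "i = k"
    proof (rule ccontr)
      assume "i \<noteq> k"
      then show False using Inv_W_strict[OF i(2,3)] bruhat_len[OF i(4)] by simp
    qed
    then show "x \<in> {simple k}" using i by simp
  qed
qed


lemma inc_gap:
  fixes f :: "nat \<Rightarrow> nat"
  assumes "\<And>i. lo \<le> i \<Longrightarrow> i < hi \<Longrightarrow> f i < f (Suc i)" "lo \<le> a" "a \<le> b" "b \<le> hi"
  shows "f a + (b - a) \<le> f b"
  using assms(3,4)
proof (induction b)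
  case 0 then show ?case by simp
next
  case (Suc b)
  show ?case
  proof (cases "a = Suc b")
    case True then show ?thesis by simp
  next
    case False
    then have ab: "a \<le> b" using Suc.prems by simp
    then have "f a + (b - a) \<le> f b" using Suc by simp
    moreover have "f b < f (Suc b)" using assms(1,2) ab Suc.prems by simp
    ultimately show ?thesis using ab by simp
  qed
qed

lemma uniq:
  assumes k: "1 \<le> k" and zF: "z \<in> FPF (2 * k)" and zt: "tau (2 * k) z = {simple k}"
  shows "z = W k"
proof -
  have zp: "z permutes {1..2*k}" and zz: "z \<circ> z = id" and nf: "\<forall>x\<in>{1..2*k}. z x \<noteq> x"
    using zF by (auto simp: FPF_def)
  have zz': "\<And>x. z (z x) = x" using zz by (metis comp_apply id_apply)
  have inj: "inj z" using FPF_inj[OF zF] .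
  have img: "\<And>x. x \<in> {1..2*k} \<Longrightarrow> z x \<in> {1..2*k}" using permutes_in_image[OF zp] by blast
  have inc: "z i < z (Suc i)" if i: "1 \<le> i" "i < 2 * k" "i \<noteq> k" for i
  proof -
    have "\<not> z (Suc i) < z i"
    proof
      assume "z (Suc i) < z i"
      then have "simple i \<in> tau (2 * k) z" using descent_tau[OF zF i(1,2)] by blast
      then have "simple i = simple k" using zt by simp
      then show False using simple_inj i(3) by blast
    qed
    moreover have "z i \<noteq> z (Suc i)" using inj by (simp add: inj_eq)
    ultimately show ?thesis by simp
  qed
  have b1: "\<And>i. 1 \<le> i \<Longrightarrow> i < k \<Longrightarrow> z i < z (Suc i)" using inc by simp
  have s1: "z a < z b" if "1 \<le> a" "a < b" "b \<le> k" for a b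
    using inc_gap[of 1 k z a b, OF b1] that by simp
  have cross: "k < z a" if a: "1 \<le> a" "a \<le> k" for a
  proof (rule ccontr)
    assume "\<not> k < z a"
    moreover have "z a \<in> {1..2*k}" using img a by simp
    ultimately have b: "1 \<le> z a" "z a \<le> k" by auto
    have "z a \<noteq> a" using nf a by simp
    then consider "a < z a" | "z a < a" by linarith
    then show False
    proof cases
      case 1 then have "z a < z (z a)" using s1 a b by simp
      then show False using zz' 1 by simp
    next
      case 2 then have "z (z a) < z a" using s1 a b by simp
      then show False using zz' 2 by simp
    qed
  qed
  have first: "z a = a + k" if a: "1 \<le> a" "a \<le> k" for a
  proof -
    have "z 1 + (a - 1) \<le> z a" using inc_gap[of 1 k z 1 a, OF b1] a by simp
    moreover have "k < z 1" using cross k by simp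
    moreover have "z a + (k - a) \<le> z k" using inc_gap[of 1 k z a k, OF b1] a by simp
    moreover have "z k \<le> 2 * k" using img[of k] k by simp
    ultimately show ?thesis using a by linarith
  qed
  show ?thesis
  proof
    fix x
    consider "1 \<le> x \<and> x \<le> k" | "k < x \<and> x \<le> 2 * k" | "x \<notin> {1..2*k}" by fastforce
    then show "z x = W k x"
    proof cases
      case 1 then show ?thesis using first by (simp add: W_def)
    next
      case 2
      have "1 \<le> x - k" "x - k \<le> k" using 2 by arith+
      then have "z (x - k) = x" using first[of "x - k"] 2 by simp
      then have "z x = x - k" using zz' by metis
      then show ?thesis using 2 by (simp add: W_def)
    next
      case 3
      then have "z x = x" using zp by (simp add: permutes_def)
      then show ?thesis using 3 by (auto simp: W_def)
    qed
  qed
qed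

theorem proposition6p5:
  shows "(\<forall>n::nat. even n \<and> 2 \<le> n \<longrightarrow>
            (\<exists>!w. w \<in> FPF n \<and> tau n w = {simple (n div 2)})) \<and>
         (\<forall>n::nat. even n \<and> 4 \<le> n \<longrightarrow>
            (\<forall>w w'. w \<in> FPF n \<and> tau n w = {simple (n div 2)} \<and>
                    w' \<in> FPF (n - 2) \<and> tau (n - 2) w' = {simple ((n - 2) div 2)} \<longrightarrow>
                    w = nu (n div 2) (rho n w')))"
proof (intro conjI allI impI)
  fix n :: nat assume n: "even n \<and> 2 \<le> n"
  then obtain k where nk: "n = 2 * k" by (metis evenE)
  have k: "1 \<le> k" using n nk by simp
  have d: "n div 2 = k" using nk by simp
  show "\<exists>!w. w \<in> FPF n \<and> tau n w = {simple (n div 2)}"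
    unfolding d unfolding nk
  proof (rule ex1I[of _ "W k"])
    show "W k \<in> FPF (2 * k) \<and> tau (2 * k) (W k) = {simple k}" using W_FPF W_tau[OF k] by simp
  next
    fix w assume "w \<in> FPF (2 * k) \<and> tau (2 * k) w = {simple k}"
    then show "w = W k" using uniq[OF k] by blast
  qed
next
  fix n :: nat and w w' assume n: "even n \<and> 4 \<le> n"
    and ww: "w \<in> FPF n \<and> tau n w = {simple (n div 2)} \<and>
                    w' \<in> FPF (n - 2) \<and> tau (n - 2) w' = {simple ((n - 2) div 2)}"
  then obtain k where nk: "n = 2 * k" using n by (metis evenE)
  have k: "2 \<le> k" using n nk by simp
  have d: "n div 2 = k" using nk by simp
  have n2: "n - 2 = 2 * (k - 1)" using nk by simp
  have d2: "(n - 2) div 2 = k - 1" using nk by simp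
  have k1: "1 \<le> k" using k by simp
  have w1: "w \<in> FPF (2 * k)" "tau (2 * k) w = {simple k}" using ww d nk by auto
  have "w = W k" using uniq[OF k1 w1] .
  have k2: "1 \<le> k - 1" using k by simp
  have w2: "w' \<in> FPF (2 * (k - 1))" "tau (2 * (k - 1)) w' = {simple (k - 1)}" using ww d2 n2 by auto
  have "w' = W (k - 1)" using uniq[OF k2 w2] .
  have "nu k (rho (2 * k) (W (k - 1))) = W k" using part2[OF k] .
  then show "w = nu (n div 2) (rho n w')" using \<open>w = W k\<close> \<open>w' = W (k - 1)\<close> d nk by simp
qed

end
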